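(* Let $s\ge1$ and $k\ge0$ be integers with $2s>k$. Then: (a) for all partitions $\lambda,\mu$ with $|\lambda|+|\mu|\le k$, the set $\Lambda^s_{\lambda,\mu}$ is (the diagram of) a partition with $|\Lambda^s_{\lambda,\mu}|=s(2s+1)+2|\lambda|+2|\mu|$ and $\mathrm{cweight}(\Lambda^s_{\lambda,\mu})=s$; (b) the map $(\lambda,\mu)\mapsto\Lambda^s_{\lambda,\mu}$ is a bijection from the set of pairs of partitions with $|\lambda|+|\mu|\le k$ onto the set of partitions $\nu$ with $\mathrm{cweight}(\nu)=s$ and $|\nu|\le s(2s+1)+2k$.
   Context: A partition $\nu=(\nu_1\ge\nu_2\ge\cdots)$ is identified with its diagram $\{(x,y)\in\mathbb Z^2:1\le x\le\ell(\nu),\,1\le y\le\nu_x\}$ (row index $x$, column index $y$); $|\nu|$ is the number of boxes and $\ell(\nu)$ the number of nonzero parts. The box $(x,y)$ has color $x-y\bmod 2\in\mathbb Z/2\mathbb Z$. The cweight of $\nu$ is $\mathrm{cweight}(\nu)=\#\{\text{boxes of color }1\}-\#\{\text{boxes of color }0\}$. For $s\ge1$ let $\Lambda^s=(2s,2s-1,\dots,2,1)$ (so $|\Lambda^s|=s(2s+1)$). For partitions $\lambda,\mu$ let $\Lambda^s_{\lambda,\mu}=\Lambda^s\cup\{(x,\,2s-x+1+t):1\le x\le\ell(\lambda),\,1\le t\le2\lambda_x\}\cup\{(2s-y+1+t,\,y):1\le y\le\ell(\mu),\,1\le t\le 2\mu_y\}$, i.e. $\Lambda^s$ with row $x$ lengthened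 by $2\lambda_x$ boxes and column $y$ lengthened by $2\mu_y$ boxes. *)

theory Defs
  imports Main
begin

text \<open>A partition is a weakly decreasing list of positive integers
  (parts nu_1 >= nu_2 >= ...; nu_x is the entry at index x-1).\<close>
definition is_partition :: "nat list \<Rightarrow> bool" where
  "is_partition p \<longleftrightarrow> sorted (rev p) \<and> 0 \<notin> set p"

definition psize :: "nat list \<Rightarrow> nat" where
  "psize p = sum_list p"

definition diagram :: "nat list \<Rightarrow> (int \<times> int) set" where
  "diagram p = {(x, y). 1 \<le> x \<and> x \<le> int (length p) \<and> 1 \<le> y \<and> y \<le> int (p ! nat (x - 1))}"

definition cweight :: "(int \<times> int) set \<Rightarrow> int" where
  "cweight D = int (card {b \<in> D. (fst b - snd b) mod 2 = 1})
              - int (card {b \<in> D. (fst b - snd b) mod 2 = 0})"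

definition staircase :: "nat \<Rightarrow> nat list" where
  "staircase s = rev [1..<2 * s + 1]"

definition Lam :: "nat \<Rightarrow> nat list \<Rightarrow> nat list \<Rightarrow> (int \<times> int) set" where
  "Lam s la mu = diagram (staircase s)
     \<union> {(x, 2 * int s - x + 1 + t) | x t. 1 \<le> x \<and> x \<le> int (length la)
           \<and> 1 \<le> t \<and> t \<le> 2 * int (la ! nat (x - 1))}
     \<union> {(2 * int s - y + 1 + t, y) | y t. 1 \<le> y \<and> y \<le> int (length mu)
           \<and> 1 \<le> t \<and> t \<le> 2 * int (mu ! nat (y - 1))}"

end

theory Submission
  imports Defs
begin

definition fl :: "nat list \<Rightarrow> int \<Rightarrow> int" where
  "fl p a = (if 1 \<le> a \<and> a \<le> int (length p) then int (p ! nat (a - 1)) else 0)"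

definition Young :: "(int \<times> int) set \<Rightarrow> bool" where
  "Young D \<longleftrightarrow> finite D \<and> (\<forall>a b. (a,b) \<in> D \<longrightarrow> 1 \<le> a \<and> 1 \<le> b)
     \<and> (\<forall>a b a' b'. (a,b) \<in> D \<and> 1 \<le> a' \<and> a' \<le> a \<and> 1 \<le> b' \<and> b' \<le> b \<longrightarrow> (a',b') \<in> D)"

definition LamC :: "nat \<Rightarrow> nat list \<Rightarrow> nat list \<Rightarrow> (int \<times> int) set" where
  "LamC s la mu = {(a,b). 1 \<le> a \<and> 1 \<le> b \<and> a + b \<le> 2 * int s + 1 + 2 * max (fl la a) (fl mu b)}"

definition stair :: "nat \<Rightarrow> (int \<times> int) set" where
  "stair m = {(a,b). 1 \<le> a \<and> 1 \<le> b \<and> a + b \<le> int m + 1}"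

lemma part_pos: "is_partition p \<Longrightarrow> i < length p \<Longrightarrow> 1 \<le> p ! i"
  unfolding is_partition_def by (metis less_one not_le nth_mem)

lemma part_mono: "is_partition p \<Longrightarrow> i \<le> j \<Longrightarrow> j < length p \<Longrightarrow> p ! j \<le> p ! i"
  unfolding is_partition_def by (simp add: sorted_rev_iff_nth_mono)

lemma length_le_psize: "is_partition p \<Longrightarrow> length p \<le> psize p"
proof -
  have "0 \<notin> set p \<Longrightarrow> length p \<le> sum_list p" for p :: "nat list"
    by (induct p) auto
  then show "is_partition p \<Longrightarrow> length p \<le> psize p"
    unfolding is_partition_def psize_def by blast
qed

lemma fl_nonneg: "0 \<le> fl p a"
  unfolding fl_def by auto

lemma fl_pos: "is_partition p \<Longrightarrow> (0 < fl p a) = (1 \<le> a \<and> a \<le> int (length p))"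
proof -
  assume p: "is_partition p"
  have "1 \<le> a \<Longrightarrow> a \<le> int (length p) \<Longrightarrow> 1 \<le> p ! nat (a - 1)"
    by (rule part_pos[OF p]) linarith
  then show ?thesis unfolding fl_def by auto
qed

lemma fl_anti: "is_partition p \<Longrightarrow> 1 \<le> a \<Longrightarrow> a \<le> a' \<Longrightarrow> fl p a' \<le> fl p a"
  unfolding fl_def using part_mono[of p "nat (a - 1)" "nat (a' - 1)"] by auto

lemma disj: "is_partition la \<Longrightarrow> is_partition mu \<Longrightarrow> 0 < fl la a \<Longrightarrow> 0 < fl mu b
   \<Longrightarrow> a + b \<le> int (psize la + psize mu)"
  using fl_pos[of la a] fl_pos[of mu b] length_le_psize[of la] length_le_psize[of mu] by auto

lemma staircase_diag: "diagram (staircase s) = stair (2 * s)"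
proof -
  have len: "length (staircase s) = 2 * s" by (simp add: staircase_def)
  have nth: "i < 2 * s \<Longrightarrow> staircase s ! i = 2 * s - i" for i
    unfolding staircase_def by (simp add: rev_nth del: upt_Suc)
  show ?thesis
    unfolding diagram_def stair_def len
    using nth by (auto simp: nat_less_iff)
qed

lemma Lam_char:
  assumes la: "is_partition la" and mu: "is_partition mu"
    and l1: "length la \<le> 2 * s" and l2: "length mu \<le> 2 * s"
  shows "Lam s la mu = LamC s la mu"
proof (rule set_eqI, rule iffI)
  fix p assume "p \<in> Lam s la mu"
  then consider (st) "p \<in> stair (2 * s)"
    | (r) x t where "p = (x, 2 * int s - x + 1 + t)" "1 \<le> x" "x \<le> int (length la)"
           "1 \<le> t" "t \<le> 2 * int (la ! nat (x - 1))"
    | (c) y t where "p = (2 * int s - y + 1 + t, y)" "1 \<le> y" "y \<le> int (length mu)"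
           "1 \<le> t" "t \<le> 2 * int (mu ! nat (y - 1))"
    unfolding Lam_def staircase_diag by blast
  then show "p \<in> LamC s la mu"
  proof cases
    case st then show ?thesis unfolding stair_def LamC_def
      by (auto simp: max_def) (smt (verit) fl_nonneg)+
  next
    case r
    then have "fl la x = int (la ! nat (x - 1))" unfolding fl_def by auto
    then show ?thesis using r l1 fl_nonneg[of mu] unfolding LamC_def by auto
  next
    case c
    then have "fl mu y = int (mu ! nat (y - 1))" unfolding fl_def by auto
    then show ?thesis using c l2 fl_nonneg[of la] unfolding LamC_def by auto
  qed
next
  fix p assume "p \<in> LamC s la mu"
  then obtain a b where p: "p = (a, b)" "1 \<le> a" "1 \<le> b"
    "a + b \<le> 2 * int s + 1 + 2 * max (fl la a) (fl mu b)"
    unfolding LamC_def by auto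
  show "p \<in> Lam s la mu"
  proof (cases "a + b \<le> 2 * int s + 1")
    case True
    then show ?thesis using p unfolding Lam_def staircase_diag stair_def by auto
  next
    case False
    show ?thesis
    proof (cases "fl mu b \<le> fl la a")
      case True
      with False p have pos: "0 < fl la a" by auto
      with fl_pos[OF la] have a: "a \<le> int (length la)" by auto
      with p have "fl la a = int (la ! nat (a - 1))" unfolding fl_def by auto
      then have "\<exists>x t. p = (x, 2 * int s - x + 1 + t) \<and> 1 \<le> x \<and> x \<le> int (length la)
           \<and> 1 \<le> t \<and> t \<le> 2 * int (la ! nat (x - 1))"
        using p a True False by (intro exI[of _ a] exI[of _ "a + b - 2 * int s - 1"]) auto
      then show ?thesis unfolding Lam_def by blast
    next
      case True2: False
      with False p have pos: "0 < fl mu b" by auto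
      with fl_pos[OF mu] have b: "b \<le> int (length mu)" by auto
      with p have "fl mu b = int (mu ! nat (b - 1))" unfolding fl_def by auto
      then have "\<exists>y t. p = (2 * int s - y + 1 + t, y) \<and> 1 \<le> y \<and> y \<le> int (length mu)
           \<and> 1 \<le> t \<and> t \<le> 2 * int (mu ! nat (y - 1))"
        using p b True2 False by (intro exI[of _ b] exI[of _ "a + b - 2 * int s - 1"]) auto
      then show ?thesis unfolding Lam_def by blast
    qed
  qed
qed

lemma diagram_Sigma: "diagram nu = Sigma {1..int (length nu)} (\<lambda>x. {1..int (nu ! nat (x - 1))})"
  unfolding diagram_def by auto

lemma card_diagram: "card (diagram nu) = psize nu"
proof -
  have "card (diagram nu) = (\<Sum>x\<in>{1..int (length nu)}. nu ! nat (x - 1))"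
    unfolding diagram_Sigma by (subst card_SigmaI) simp_all
  also have "\<dots> = (\<Sum>i\<in>{0..<length nu}. nu ! i)"
  proof (rule sum.reindex_bij_witness[of _ "\<lambda>i. int i + 1" "\<lambda>x. nat (x - 1)"])
    fix a assume "a \<in> {0..<length nu}" then show "nat (int a + 1 - 1) = a" by simp
  next
    fix a assume "a \<in> {0..<length nu}" then show "int a + 1 \<in> {1..int (length nu)}" by simp
  next
    fix a assume "a \<in> {1..int (length nu)}" then show "int (nat (a - 1)) + 1 = a" by simp
  next
    fix a assume "a \<in> {1..int (length nu)}" then show "nat (a - 1) \<in> {0..<length nu}" by (simp add: nat_less_iff)
  next
    fix a assume "a \<in> {1..int (length nu)}" then show "nu ! nat (a - 1) = nu ! nat (a - 1)" by simp
  qed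
  also have "\<dots> = psize nu" unfolding psize_def by (simp add: sum_list_sum_nth)
  finally show ?thesis .
qed

lemma Young_diagram: assumes "is_partition nu" shows "Young (diagram nu)"
proof -
  have "diagram nu \<subseteq> {1..int (length nu)} \<times> {1..int (psize nu)}"
  proof
    fix p assume "p \<in> diagram nu"
    then obtain x y where p: "p = (x,y)" "1 \<le> x" "x \<le> int (length nu)" "1 \<le> y" "y \<le> int (nu ! nat (x - 1))"
      unfolding diagram_def by blast
    have "nat (x - 1) < length nu" using p by (simp add: nat_less_iff)
    then have "nu ! nat (x - 1) \<le> psize nu" unfolding psize_def by (rule elem_le_sum_list)
    then show "p \<in> {1..int (length nu)} \<times> {1..int (psize nu)}" using p by simp
  qed
  then have fin: "finite (diagram nu)" by (rule finite_subset) simp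
  have mono: "nu ! nat (a - 1) \<le> nu ! nat (a' - 1)"
    if "1 \<le> a'" "a' \<le> a" "a \<le> int (length nu)" for a a'
    using part_mono[OF assms, of "nat (a' - 1)" "nat (a - 1)"] that by (simp add: nat_less_iff)
  have dc: "(a', b') \<in> diagram nu" if "(a,b) \<in> diagram nu" "1 \<le> a'" "a' \<le> a" "1 \<le> b'" "b' \<le> b" for a b a' b'
  proof -
    have "1 \<le> a" "a \<le> int (length nu)" "b \<le> int (nu ! nat (a - 1))"
      using that(1) unfolding diagram_def by auto
    moreover have "int (nu ! nat (a - 1)) \<le> int (nu ! nat (a' - 1))"
      using mono[of a' a] that calculation by simp
    ultimately show ?thesis using that unfolding diagram_def by simp
  qed
  show ?thesis unfolding Young_def using fin dc unfolding diagram_def by blast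
qed

lemma downset_int:
  assumes fin: "finite S" and pos: "\<forall>y\<in>S. 1 \<le> y"
    and dc: "\<forall>y y'. y \<in> S \<and> 1 \<le> y' \<and> y' \<le> y \<longrightarrow> y' \<in> S"
  shows "S = {1..int (card S)}"
proof (cases "S = {}")
  case True then show ?thesis by simp
next
  case False
  define m where "m = Max S"
  have mS: "m \<in> S" using fin False unfolding m_def by simp
  have le: "y \<le> m" if "y \<in> S" for y using Max_ge[OF fin that] unfolding m_def .
  have Sm: "S = {1..m}"
  proof
    show "S \<subseteq> {1..m}"
    proof
      fix y assume "y \<in> S" then show "y \<in> {1..m}" using le pos by simp
    qed
    show "{1..m} \<subseteq> S"
    proof
      fix y assume "y \<in> {1..m}" then have "1 \<le> y" "y \<le> m" by auto
      then show "y \<in> S" using dc mS by blast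
    qed
  qed
  have m1: "1 \<le> m" using pos mS by simp
  have "card S = nat m" unfolding Sm by simp
  then have "int (card S) = m" using m1 by simp
  then show ?thesis using Sm by simp
qed

lemma Young_ex: assumes Y: "Young D" shows "\<exists>nu. is_partition nu \<and> D = diagram nu"
proof -
  have fin: "finite D" and pos: "\<And>a b. (a,b) \<in> D \<Longrightarrow> 1 \<le> a \<and> 1 \<le> b"
    and dc: "\<And>a b a' b'. (a,b) \<in> D \<Longrightarrow> 1 \<le> a' \<Longrightarrow> a' \<le> a \<Longrightarrow> 1 \<le> b' \<Longrightarrow> b' \<le> b \<Longrightarrow> (a',b') \<in> D"
    using Y unfolding Young_def by blast+
  define R where "R x = {y. (x,y) \<in> D}" for x
  define n where "n = card {x. (x,1) \<in> D}"
  have finR: "finite (R x)" for x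
  proof (rule finite_subset[of _ "snd ` D"])
    show "R x \<subseteq> snd ` D" unfolding R_def by force
  qed (simp add: fin)
  have R: "R x = {1..int (card (R x))}" if "1 \<le> x" for x
  proof (rule downset_int[OF finR])
    show "\<forall>y\<in>R x. 1 \<le> y" unfolding R_def using pos by blast
    show "\<forall>y y'. y \<in> R x \<and> 1 \<le> y' \<and> y' \<le> y \<longrightarrow> y' \<in> R x"
      unfolding R_def using dc that by blast
  qed
  have C: "{x. (x,1) \<in> D} = {1..int n}"
    unfolding n_def
  proof (rule downset_int)
    show "finite {x. (x,1) \<in> D}"
      by (rule finite_subset[of _ "fst ` D"]) (force, simp add: fin)
    show "\<forall>y\<in>{x. (x,1) \<in> D}. 1 \<le> y" using pos by blast
    show "\<forall>y y'. y \<in> {x. (x,1) \<in> D} \<and> 1 \<le> y' \<and> y' \<le> y \<longrightarrow> y' \<in> {x. (x,1) \<in> D}"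
      using dc by blast
  qed
  define nu where "nu = map (\<lambda>i. card (R (int i))) [1..<n+1]"
  have len: "length nu = n" unfolding nu_def by simp
  have nth: "nu ! j = card (R (int j + 1))" if "j < n" for j
    unfolding nu_def using that by (simp add: add.commute nth_map_upt del: upt_Suc)
  have sub: "R x' \<subseteq> R x" if "1 \<le> x" "x \<le> x'" for x x'
  proof
    fix y assume "y \<in> R x'"
    then have "(x', y) \<in> D" unfolding R_def by simp
    moreover then have "1 \<le> y" using pos by blast
    ultimately have "(x, y) \<in> D" using dc that by blast
    then show "y \<in> R x" unfolding R_def by simp
  qed
  have part: "is_partition nu"
    unfolding is_partition_def
  proof
    show "sorted (rev nu)" unfolding sorted_rev_iff_nth_mono len
    proof (intro allI impI)
      fix i j assume ij: "i \<le> j" "j < n"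
      then have "card (R (int j + 1)) \<le> card (R (int i + 1))"
        by (intro card_mono finR sub) auto
      then show "nu ! j \<le> nu ! i" using nth ij by simp
    qed
    show "0 \<notin> set nu"
    proof
      assume "0 \<in> set nu"
      then obtain j where j: "j < n" "nu ! j = 0" by (auto simp: in_set_conv_nth len)
      then have "int j + 1 \<in> {x. (x,1) \<in> D}" using C by simp
      then have "1 \<in> R (int j + 1)" unfolding R_def by simp
      then have "R (int j + 1) \<noteq> {}" by blast
      then have "card (R (int j + 1)) \<noteq> 0" using finR by simp
      then show False using j nth by simp
    qed
  qed
  have "D = diagram nu"
  proof (rule set_eqI)
    fix p show "p \<in> D \<longleftrightarrow> p \<in> diagram nu"
    proof (cases p)
      case (Pair x y)
      have e1: "(x,y) \<in> D \<longleftrightarrow> 1 \<le> x \<and> x \<le> int n \<and> y \<in> R x"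
      proof
        assume xy: "(x,y) \<in> D"
        then have x1: "1 \<le> x" using pos by blast
        have "1 \<le> y" using pos xy by blast
        then have "(x,1) \<in> D" using dc[OF xy x1 order.refl, of 1] by simp
        then have "x \<in> {1..int n}" using C by blast
        then show "1 \<le> x \<and> x \<le> int n \<and> y \<in> R x" using xy unfolding R_def by simp
      next
        assume "1 \<le> x \<and> x \<le> int n \<and> y \<in> R x"
        then show "(x,y) \<in> D" unfolding R_def by simp
      qed
      have e2: "(x,y) \<in> diagram nu \<longleftrightarrow> 1 \<le> x \<and> x \<le> int n \<and> y \<in> R x"
      proof (cases "1 \<le> x \<and> x \<le> int n")
        case True
        then have "nu ! nat (x - 1) = card (R x)" using nth[of "nat (x - 1)"] by (simp add: nat_less_iff)
        moreover have "y \<in> R x \<longleftrightarrow> 1 \<le> y \<and> y \<le> int (card (R x))"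
          using R[of x] True by (metis atLeastAtMost_iff)
        ultimately show ?thesis using True unfolding diagram_def len by simp
      next
        case False then show ?thesis unfolding diagram_def len by auto
      qed
      show ?thesis using e1 e2 Pair by simp
    qed
  qed
  with part show ?thesis by blast
qed

definition col :: "int \<times> int \<Rightarrow> int" where
  "col b = (if (fst b - snd b) mod 2 = 1 then 1 else -1)"

lemma cweight_union:
  assumes "finite A" "finite B" "A \<inter> B = {}"
  shows "cweight (A \<union> B) = cweight A + cweight B"
proof -
  have "card {b \<in> A \<union> B. P b} = card {b \<in> A. P b} + card {b \<in> B. P b}" for P
  proof -
    have "{b \<in> A \<union> B. P b} = {b \<in> A. P b} \<union> {b \<in> B. P b}" by blast
    moreover have "{b \<in> A. P b} \<inter> {b \<in> B. P b} = {}" using assms(3) by blast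
    ultimately show ?thesis using assms(1,2) by (simp add: card_Un_disjoint)
  qed
  then show ?thesis unfolding cweight_def by simp
qed

lemma cweight_empty: "cweight {} = 0" unfolding cweight_def by simp

lemma cweight_single: "cweight {a} = col a"
proof (cases "(fst a - snd a) mod 2 = 1")
  case True
  then have "{b \<in> {a}. (fst b - snd b) mod 2 = 1} = {a}" "{b \<in> {a}. (fst b - snd b) mod 2 = 0} = {}" by auto
  then show ?thesis using True unfolding cweight_def col_def by simp
next
  case False
  then have "(fst a - snd a) mod 2 = 0" by presburger
  then have "{b \<in> {a}. (fst b - snd b) mod 2 = 1} = {}" "{b \<in> {a}. (fst b - snd b) mod 2 = 0} = {a}" by auto
  then show ?thesis using False unfolding cweight_def col_def by simp
qed

lemma cweight_insert: "finite A \<Longrightarrow> a \<notin> A \<Longrightarrow> cweight (insert a A) = col a + cweight A"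
  using cweight_union[of "{a}" A] cweight_single[of a] by simp

lemma cweight_hdom: "cweight {(x,y),(x,y+1)} = 0"
proof -
  have "cweight {(x,y),(x,y+1)} = col (x,y) + col (x,y+1)"
    using cweight_insert[of "{(x,y+1)}" "(x,y)"] cweight_single[of "(x,y+1)"] by simp
  also have "\<dots> = 0" unfolding col_def by simp presburger
  finally show ?thesis .
qed

lemma cweight_vdom: "cweight {(x,y),(x+1,y)} = 0"
proof -
  have "cweight {(x,y),(x+1,y)} = col (x,y) + col (x+1,y)"
    using cweight_insert[of "{(x+1,y)}" "(x,y)"] cweight_single[of "(x+1,y)"] by simp
  also have "\<dots> = 0" unfolding col_def by simp presburger
  finally show ?thesis .
qed

lemma finite_stair: "finite (stair m)"
proof (rule finite_subset)
  show "stair m \<subseteq> {1..int m} \<times> {1..int m}" unfolding stair_def by auto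
qed simp

lemma stair_Suc: "stair (Suc m) = stair m \<union> (\<lambda>a. (a, int m + 2 - a)) ` {1..int m + 1}"
  unfolding stair_def by auto

lemma stair_props: "2 * card (stair m) = m * (m + 1) \<and>
   cweight (stair m) = (if even m then int m div 2 else - ((int m + 1) div 2))"
proof (induct m)
  case 0
  have "stair 0 = {}" unfolding stair_def by auto
  then show ?case by (simp add: cweight_empty)
next
  case (Suc m)
  define A where "A = (\<lambda>a. (a, int m + 2 - a)) ` {1..int m + 1}"
  have inj: "inj_on (\<lambda>a. (a, int m + 2 - a)) {1..int m + 1}" by (rule inj_onI) simp
  have cA: "card A = m + 1" unfolding A_def using card_image[OF inj] by simp
  have finA: "finite A" unfolding A_def by simp
  have dis: "stair m \<inter> A = {}" unfolding A_def stair_def by auto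
  have cardS: "card (stair (Suc m)) = card (stair m) + (m + 1)"
    unfolding stair_Suc A_def[symmetric] using card_Un_disjoint[OF finite_stair finA dis] cA by simp
  have colA: "\<forall>b\<in>A. (fst b - snd b) mod 2 = int m mod 2"
    unfolding A_def by auto presburger
  have cwA: "cweight A = (if odd m then int m + 1 else - (int m + 1))"
  proof (cases "odd m")
    case True
    then have "int m mod 2 = 1" by presburger
    then have e1: "{b \<in> A. (fst b - snd b) mod 2 = 1} = A" and e2: "{b \<in> A. (fst b - snd b) mod 2 = 0} = {}"
      using colA by auto
    show ?thesis unfolding cweight_def e1 e2 using True cA by simp
  next
    case False
    then have "int m mod 2 = 0" by presburger
    then have e1: "{b \<in> A. (fst b - snd b) mod 2 = 1} = {}" and e2: "{b \<in> A. (fst b - snd b) mod 2 = 0} = A"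
      using colA by auto
    show ?thesis unfolding cweight_def e1 e2 using False cA by simp
  qed
  have "cweight (stair (Suc m)) = cweight (stair m) + cweight A"
    unfolding stair_Suc A_def[symmetric] by (rule cweight_union[OF finite_stair finA dis])
  then show ?case using Suc cardS cwA by (auto simp: algebra_simps)
qed

definition hrem :: "(int \<times> int) set \<Rightarrow> int \<Rightarrow> int \<Rightarrow> bool" where
  "hrem D x y \<longleftrightarrow> (x,y) \<in> D \<and> (x,y+1) \<in> D \<and> (x,y+2) \<notin> D \<and> (x+1,y) \<notin> D"

definition vrem :: "(int \<times> int) set \<Rightarrow> int \<Rightarrow> int \<Rightarrow> bool" where
  "vrem D x y \<longleftrightarrow> (x,y) \<in> D \<and> (x+1,y) \<in> D \<and> (x+2,y) \<notin> D \<and> (x,y+1) \<notin> D"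

lemma YoungD:
  assumes "Young D"
  shows "finite D" "\<And>a b. (a,b) \<in> D \<Longrightarrow> 1 \<le> a" "\<And>a b. (a,b) \<in> D \<Longrightarrow> 1 \<le> b"
    "\<And>a b a' b'. (a,b) \<in> D \<Longrightarrow> 1 \<le> a' \<Longrightarrow> a' \<le> a \<Longrightarrow> 1 \<le> b' \<Longrightarrow> b' \<le> b \<Longrightarrow> (a',b') \<in> D"
  using assms unfolding Young_def by blast+

lemma YoungI:
  assumes "finite D" "\<And>a b. (a,b) \<in> D \<Longrightarrow> 1 \<le> a \<and> 1 \<le> b"
    "\<And>a b a' b'. (a,b) \<in> D \<Longrightarrow> 1 \<le> a' \<Longrightarrow> a' \<le> a \<Longrightarrow> 1 \<le> b' \<Longrightarrow> b' \<le> b \<Longrightarrow> (a',b') \<in> D"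
  shows "Young D"
  using assms unfolding Young_def by blast

lemma Young_hrem:
  assumes Y: "Young D" and h: "hrem D x y"
  shows "Young (D - {(x,y),(x,y+1)})"
proof (rule YoungI)
  show "finite (D - {(x,y),(x,y+1)})" using YoungD(1)[OF Y] by simp
next
  fix a b assume "(a,b) \<in> D - {(x,y),(x,y+1)}"
  then show "1 \<le> a \<and> 1 \<le> b" using YoungD(2,3)[OF Y] by blast
next
  fix a b a' b' assume "(a,b) \<in> D - {(x,y),(x,y+1)}" "1 \<le> a'" "a' \<le> a" "1 \<le> b'" "b' \<le> b"
  then have as: "(a,b) \<in> D - {(x,y),(x,y+1)} \<and> 1 \<le> a' \<and> a' \<le> a \<and> 1 \<le> b' \<and> b' \<le> b" by blast
  then have in1: "(a',b') \<in> D" using YoungD(4)[OF Y] by blast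
  have "(a',b') \<notin> {(x,y),(x,y+1)}"
  proof
    assume "(a',b') \<in> {(x,y),(x,y+1)}"
    then have a': "a' = x" and b': "y \<le> b'" "b' \<le> y + 1" by auto
    show False
    proof (cases "a = x")
      case True
      then have "b \<ge> y + 2" using as b' by auto
      then have "(x, y+2) \<in> D" using as True YoungD(4)[OF Y, of a b x "y+2"] h
        YoungD(2)[OF Y, of x y] YoungD(3)[OF Y, of x y] unfolding hrem_def by auto
      then show False using h unfolding hrem_def by simp
    next
      case False
      then have "a \<ge> x + 1" using as a' by auto
      then have "(x+1, y) \<in> D" using as a' b' YoungD(4)[OF Y, of a b "x+1" y] YoungD(3)[OF Y, of x y] h
        unfolding hrem_def by auto
      then show False using h unfolding hrem_def by simp
    qed
  qed
  with in1 show "(a',b') \<in> D - {(x,y),(x,y+1)}" by simp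
qed

lemma Young_vrem:
  assumes Y: "Young D" and h: "vrem D x y"
  shows "Young (D - {(x,y),(x+1,y)})"
proof (rule YoungI)
  show "finite (D - {(x,y),(x+1,y)})" using YoungD(1)[OF Y] by simp
next
  fix a b assume "(a,b) \<in> D - {(x,y),(x+1,y)}"
  then show "1 \<le> a \<and> 1 \<le> b" using YoungD(2,3)[OF Y] by blast
next
  fix a b a' b' assume "(a,b) \<in> D - {(x,y),(x+1,y)}" "1 \<le> a'" "a' \<le> a" "1 \<le> b'" "b' \<le> b"
  then have as: "(a,b) \<in> D - {(x,y),(x+1,y)} \<and> 1 \<le> a' \<and> a' \<le> a \<and> 1 \<le> b' \<and> b' \<le> b" by blast
  then have in1: "(a',b') \<in> D" using YoungD(4)[OF Y] by blast
  have "(a',b') \<notin> {(x,y),(x+1,y)}"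
  proof
    assume "(a',b') \<in> {(x,y),(x+1,y)}"
    then have b': "b' = y" and a': "x \<le> a'" "a' \<le> x + 1" by auto
    show False
    proof (cases "b = y")
      case True
      then have "a \<ge> x + 2" using as a' by auto
      then have "(x+2, y) \<in> D" using as True YoungD(4)[OF Y, of a b "x+2" y] h
        YoungD(2)[OF Y, of x y] YoungD(3)[OF Y, of x y] unfolding vrem_def by auto
      then show False using h unfolding vrem_def by simp
    next
      case False
      then have "b \<ge> y + 1" using as b' by auto
      then have "(x, y+1) \<in> D" using as a' b' YoungD(4)[OF Y, of a b x "y+1"] YoungD(2)[OF Y, of x y] h
        unfolding vrem_def by auto
      then show False using h unfolding vrem_def by simp
    qed
  qed
  with in1 show "(a',b') \<in> D - {(x,y),(x+1,y)}" by simp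
qed

lemma core:
  assumes Y: "Young D" and nh: "\<And>x y. \<not> hrem D x y" and nv: "\<And>x y. \<not> vrem D x y"
  shows "\<exists>m. D = stair m"
proof -
  note fin = YoungD(1)[OF Y] and p1 = YoungD(2)[OF Y] and p2 = YoungD(3)[OF Y]
    and dc = YoungD(4)[OF Y]
  define m where "m = card {y. (1,y) \<in> D}"
  have row1: "{y. (1,y) \<in> D} = {1..int m}"
    unfolding m_def
  proof (rule downset_int)
    show "finite {y. (1,y) \<in> D}"
      by (rule finite_subset[of _ "snd ` D"]) (force, simp add: fin)
    show "\<forall>y\<in>{y. (1,y) \<in> D}. 1 \<le> y" using p2 by blast
    show "\<forall>y y'. y \<in> {y. (1,y) \<in> D} \<and> 1 \<le> y' \<and> y' \<le> y \<longrightarrow> y' \<in> {y. (1,y) \<in> D}"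
      using dc by blast
  qed
  have P: "\<forall>y. (int j + 1, y) \<in> D \<longleftrightarrow> 1 \<le> y \<and> y \<le> int m - int j" if "j \<le> m" for j
    using that
  proof (induct j)
    case 0
    show ?case using row1 by (simp add: set_eq_iff)
  next
    case (Suc j)
    define x where "x = int j + 1"
    define c where "c = int m - int j"
    have c1: "c \<ge> 1" using Suc.prems unfolding c_def by simp
    have IH: "\<And>y. (x, y) \<in> D \<longleftrightarrow> 1 \<le> y \<and> y \<le> c"
      using Suc unfolding x_def c_def by simp
    have x1: "x \<ge> 1" unfolding x_def by simp
    have notc: "(x + 1, c) \<notin> D"
    proof
      assume xc: "(x + 1, c) \<in> D"
      define B where "B = {a. (a, c) \<in> D}"
      have finB: "finite B" unfolding B_def
        by (rule finite_subset[of _ "fst ` D"]) (force, simp add: fin)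
      have xB: "x + 1 \<in> B" using xc unfolding B_def by simp
      define b where "b = Max B"
      have bB: "b \<in> B" unfolding b_def using finB xB Max_in by blast
      have geb: "x + 1 \<le> b" unfolding b_def using finB xB by simp
      have "vrem D (b - 1) c"
        unfolding vrem_def
      proof (intro conjI)
        show "(b - 1, c) \<in> D" using bB dc[of b c "b - 1" c] x1 geb c1 unfolding B_def by simp
        show "(b - 1 + 1, c) \<in> D" using bB unfolding B_def by simp
        show "(b - 1 + 2, c) \<notin> D"
        proof
          assume "(b - 1 + 2, c) \<in> D"
          then have "b + 1 \<in> B" unfolding B_def by (simp add: add.commute)
          then have "b + 1 \<le> b" unfolding b_def using finB by (rule Max_ge[rotated])
          then show False by simp
        qed
        show "(b - 1, c + 1) \<notin> D"
        proof
          assume "(b - 1, c + 1) \<in> D"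
          then have "(x, c + 1) \<in> D" using dc[of "b - 1" "c + 1" x "c + 1"] x1 geb c1 by simp
          then show False using IH by simp
        qed
      qed
      then show False using nv by blast
    qed
    have "(x + 1, y) \<in> D \<longleftrightarrow> 1 \<le> y \<and> y \<le> c - 1" for y
    proof
      assume xy: "(x + 1, y) \<in> D"
      then have "(x, y) \<in> D" using dc[of "x+1" y x y] x1 p2 by simp
      then have "y \<le> c" using IH by simp
      moreover have "y \<noteq> c" using xy notc by blast
      ultimately show "1 \<le> y \<and> y \<le> c - 1" using p2[OF xy] by simp
    next
      assume y: "1 \<le> y \<and> y \<le> c - 1"
      have "(x + 1, c - 1) \<in> D"
      proof (rule ccontr)
        assume "(x + 1, c - 1) \<notin> D"
        then have "hrem D x (c - 1)" unfolding hrem_def using IH y by simp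
        then show False using nh by blast
      qed
      then show "(x + 1, y) \<in> D" using dc[of "x + 1" "c - 1" "x + 1" y] y x1 by simp
    qed
    then show ?case unfolding x_def c_def by (simp add: algebra_simps)
  qed
  have "D = stair m"
  proof (rule set_eqI)
    fix p show "p \<in> D \<longleftrightarrow> p \<in> stair m"
    proof (cases p)
      case (Pair a b)
      have last: "(int m + 1, y) \<notin> D" for y using P[of m] by simp
      show ?thesis
      proof
        assume ab: "p \<in> D"
        then have a1: "1 \<le> a" and b1: "1 \<le> b" using p1 p2 Pair by auto
        have am: "a \<le> int m"
        proof (rule ccontr)
          assume "\<not> a \<le> int m"
          then have "(int m + 1, 1) \<in> D" using dc[of a b "int m + 1" 1] ab Pair b1 by simp
          then show False using last by blast
        qed
        have "(int (nat (a - 1)) + 1, b) \<in> D" using ab Pair a1 by simp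
        then have "b \<le> int m - int (nat (a - 1))" using P[of "nat (a - 1)"] am a1 by simp
        then show "p \<in> stair m" using Pair a1 b1 unfolding stair_def by simp
      next
        assume "p \<in> stair m"
        then have ab: "1 \<le> a" "1 \<le> b" "a + b \<le> int m + 1" using Pair unfolding stair_def by auto
        then have "(int (nat (a - 1)) + 1, b) \<in> D" using P[of "nat (a - 1)"] by simp
        then show "p \<in> D" using Pair ab by simp
      qed
    qed
  qed
  then show ?thesis by blast
qed

lemma part_iff: "is_partition p \<longleftrightarrow> (\<forall>i j. i \<le> j \<longrightarrow> j < length p \<longrightarrow> p ! j \<le> p ! i) \<and> (\<forall>i < length p. 1 \<le> p ! i)"
  unfolding is_partition_def sorted_rev_iff_nth_mono
  by (auto simp: in_set_conv_nth)

definition growL :: "nat list \<Rightarrow> int \<Rightarrow> nat list" where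
  "growL la x = (if x \<le> int (length la) then la[nat (x - 1) := la ! nat (x - 1) + 1] else la @ [1])"

lemma fl_growL:
  assumes "1 \<le> x" "x \<le> int (length la) + 1"
  shows "fl (growL la x) a = fl la a + (if a = x then 1 else 0)"
proof (cases "x \<le> int (length la)")
  case True
  then show ?thesis using assms unfolding growL_def fl_def
    by (auto simp: nth_list_update nat_less_iff)
next
  case False
  then have x: "x = int (length la) + 1" using assms by simp
  show ?thesis using x unfolding growL_def fl_def
    by (auto simp: nth_append nat_less_iff)
qed

lemma psize_growL:
  assumes "1 \<le> x" "x \<le> int (length la) + 1"
  shows "psize (growL la x) = psize la + 1"
  using assms unfolding growL_def psize_def
  by (auto simp: sum_list_update nat_less_iff)

lemma part_growL:
  assumes p: "is_partition la" and x: "1 \<le> x" "x \<le> int (length la) + 1"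
    and c: "x = 1 \<or> fl la x < fl la (x - 1)"
  shows "is_partition (growL la x)"
proof (cases "x \<le> int (length la)")
  case True
  define i where "i = nat (x - 1)"
  have i: "i < length la" using True x unfolding i_def by simp
  have ci: "i = 0 \<or> la ! i < la ! (i - 1)"
  proof (cases "x = 1")
    case True then show ?thesis unfolding i_def by simp
  next
    case False
    then have "fl la x < fl la (x - 1)" using c by simp
    moreover have "fl la x = int (la ! i)" using x True unfolding fl_def i_def by simp
    moreover have "nat (x - 1 - 1) = i - 1" unfolding i_def by simp
    moreover have "fl la (x - 1) = int (la ! nat (x - 1 - 1))" using x True False unfolding fl_def by simp
    ultimately have "la ! i < la ! (i - 1)" by simp
    then show ?thesis by simp
  qed
  have g: "growL la x = la[i := la ! i + 1]" using True unfolding growL_def i_def by simp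
  show ?thesis unfolding g part_iff
  proof (intro conjI allI impI)
    fix a b assume ab: "a \<le> b" "b < length (la[i := la ! i + 1])"
    show "la[i := la ! i + 1] ! b \<le> la[i := la ! i + 1] ! a"
    proof (cases "a = i")
      case True
      then show ?thesis using ab part_mono[OF p, of a b] i by (auto simp: nth_list_update)
    next
      case False
      show ?thesis
      proof (cases "b = i")
        case True
        then have "a \<le> i - 1" "0 < i" using ab \<open>a \<noteq> i\<close> by auto
        then have "la ! (i - 1) \<le> la ! a" using part_mono[OF p, of a "i - 1"] i by simp
        then show ?thesis using True \<open>a \<noteq> i\<close> ci \<open>0 < i\<close> ab by (auto simp: nth_list_update)
      next
        case False
        then show ?thesis using \<open>a \<noteq> i\<close> ab part_mono[OF p, of a b] by (auto simp: nth_list_update)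
      qed
    qed
  next
    fix a assume "a < length (la[i := la ! i + 1])"
    then show "1 \<le> la[i := la ! i + 1] ! a" using part_pos[OF p, of a] by (cases "a = i") (auto simp: nth_list_update)
  qed
next
  case False
  then have g: "growL la x = la @ [1]" unfolding growL_def by simp
  show ?thesis unfolding g part_iff
  proof (intro conjI allI impI)
    fix a b assume ab: "a \<le> b" "b < length (la @ [1])"
    show "(la @ [1]) ! b \<le> (la @ [1]) ! a"
      using ab part_mono[OF p, of a b] part_pos[OF p, of a] by (auto simp: nth_append)
  next
    fix a assume "a < length (la @ [1])"
    then show "1 \<le> (la @ [1]) ! a" using part_pos[OF p, of a] by (auto simp: nth_append)
  qed
qed

lemma fl_le_psize: "fl p a \<le> int (psize p)"
  unfolding fl_def psize_def using elem_le_sum_list[of "nat (a - 1)" p]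
  by (auto simp: nat_less_iff)

lemma Young_LamC:
  assumes la: "is_partition la" and mu: "is_partition mu"
  shows "Young (LamC s la mu)"
proof (rule YoungI)
  define K where "K = 2 * int s + 1 + 2 * int (psize la + psize mu)"
  have "LamC s la mu \<subseteq> {1..K} \<times> {1..K}"
  proof
    fix p assume "p \<in> LamC s la mu"
    then obtain a b where p: "p = (a,b)" "1 \<le> a" "1 \<le> b" "a + b \<le> 2 * int s + 1 + 2 * max (fl la a) (fl mu b)"
      unfolding LamC_def by blast
    have "max (fl la a) (fl mu b) \<le> int (psize la + psize mu)"
      using fl_le_psize[of la a] fl_le_psize[of mu b] by simp
    then have "a + b \<le> K" using p(4) unfolding K_def by (smt (verit))
    then show "p \<in> {1..K} \<times> {1..K}" using p by simp
  qed
  then show "finite (LamC s la mu)" by (rule finite_subset) simp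
next
  fix a b assume "(a,b) \<in> LamC s la mu" then show "1 \<le> a \<and> 1 \<le> b" unfolding LamC_def by simp
next
  fix a b a' b' assume ab: "(a,b) \<in> LamC s la mu" "1 \<le> a'" "a' \<le> a" "1 \<le> b'" "b' \<le> b"
  have "fl la a \<le> fl la a'" "fl mu b \<le> fl mu b'" using fl_anti[OF la] fl_anti[OF mu] ab by auto
  then show "(a',b') \<in> LamC s la mu" using ab unfolding LamC_def by auto
qed

definition sw :: "(int \<times> int) set \<Rightarrow> (int \<times> int) set" where
  "sw D = prod.swap ` D"

lemma sw_mem[simp]: "(a,b) \<in> sw D \<longleftrightarrow> (b,a) \<in> D"
  unfolding sw_def by force

lemma sw_sw[simp]: "sw (sw D) = D"
  unfolding sw_def by (simp add: image_image)

lemma sw_LamC: "sw (LamC s la mu) = LamC s mu la"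
  unfolding LamC_def by (auto simp: max.commute add.commute)

lemma sw_Un: "sw (A \<union> B) = sw A \<union> sw B" unfolding sw_def by auto

lemma sw_ins: "sw (insert (a,b) A) = insert (b,a) (sw A)" unfolding sw_def by auto

lemma sw_Diff: "sw (A - B) = sw A - sw B" unfolding sw_def by auto

lemma card_sw: "card (sw D) = card D"
  unfolding sw_def by (rule card_image) (metis inj_on_def swap_swap)

lemma Young_sw: "Young D \<Longrightarrow> Young (sw D)"
proof (rule YoungI)
  assume Y: "Young D"
  show "finite (sw D)" using YoungD(1)[OF Y] unfolding sw_def by simp
  show "\<And>a b. (a,b) \<in> sw D \<Longrightarrow> 1 \<le> a \<and> 1 \<le> b" using YoungD(2,3)[OF Y] by simp
  show "\<And>a b a' b'. (a,b) \<in> sw D \<Longrightarrow> 1 \<le> a' \<Longrightarrow> a' \<le> a \<Longrightarrow> 1 \<le> b' \<Longrightarrow> b' \<le> b \<Longrightarrow> (a',b') \<in> sw D"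
    using YoungD(4)[OF Y] by simp
qed

lemma cweight_sw: "cweight (sw D) = cweight D"
proof -
  have m: "(snd b - fst b) mod 2 = (fst b - snd b) mod 2" for b :: "int \<times> int" by presburger
  have "{b \<in> sw D. (fst b - snd b) mod 2 = c} = sw {b \<in> D. (fst b - snd b) mod 2 = c}" for c
    unfolding sw_def using m by force
  then show ?thesis unfolding cweight_def using card_sw by simp
qed

lemma grow:
  assumes la: "is_partition la" and mu: "is_partition mu"
    and x: "1 \<le> x" "x \<le> int (length la) + 1" and pg: "is_partition (growL la x)"
    and sz: "psize la + psize mu + 1 < 2 * s"
  defines "y \<equiv> 2 * int s + 2 - x + 2 * fl la x"
  shows "LamC s (growL la x) mu = LamC s la mu \<union> {(x,y),(x,y+1)}"
    and "(x,y) \<notin> LamC s la mu" and "(x,y+1) \<notin> LamC s la mu"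
proof -
  define la' where "la' = growL la x"
  have fl': "fl la' a = fl la a + (if a = x then 1 else 0)" for a
    unfolding la'_def using fl_growL[OF x] .
  have ps': "psize la' = psize la + 1" unfolding la'_def using psize_growL[OF x] .
  have dj: "a + b \<le> 2 * int s - 1" if "0 < fl la' a" "0 < fl mu b" for a b
    using disj[OF pg[folded la'_def] mu that] ps' sz by simp
  have Lx: "0 < fl la' x" using fl' fl_nonneg[of la x] by simp
  have nn: "0 \<le> fl la a" "0 \<le> fl mu b" for a b using fl_nonneg by auto
  have My: "fl mu b = 0" if "x + b \<ge> 2 * int s + 1" for b
  proof (rule ccontr)
    assume "fl mu b \<noteq> 0"
    then have "0 < fl mu b" using nn(2)[of b] by simp
    then show False using dj[OF Lx] that by fastforce
  qed
  have y1: "1 \<le> y"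
  proof -
    have "x \<le> int (psize la) + 1" using x length_le_psize[OF la] by simp
    then show ?thesis unfolding y_def using sz nn(1)[of x] by simp
  qed
  have yy: "x + y = 2 * int s + 2 + 2 * fl la x" unfolding y_def by simp
  show "(x,y) \<notin> LamC s la mu" "(x,y+1) \<notin> LamC s la mu"
    unfolding LamC_def using My[of y] My[of "y+1"] yy nn(1)[of x] by (auto simp: max_def)
  show "LamC s (growL la x) mu = LamC s la mu \<union> {(x,y),(x,y+1)}"
    unfolding la'_def[symmetric]
  proof (rule set_eqI)
    fix p
    show "p \<in> LamC s la' mu \<longleftrightarrow> p \<in> LamC s la mu \<union> {(x,y),(x,y+1)}"
    proof (cases p)
      case (Pair a b)
      show ?thesis
      proof (cases "a = x")
        case False
        then show ?thesis using Pair fl'[of a] unfolding LamC_def by auto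
      next
        case True
        show ?thesis
        proof (cases "0 < fl mu b")
          case Mb: True
          then have "a + b \<le> 2 * int s - 1" using dj[OF _ Mb] Lx True by simp
          then show ?thesis using Pair True nn(1)[of a] nn(2)[of b] Mb My[of b] yy y1 x(1) unfolding LamC_def
            by (auto simp: max_def)
        next
          case Mb: False
          then have M0: "fl mu b = 0" using nn(2)[of b] by simp
          have "max (fl la' x) (fl mu b) = fl la x + 1" "max (fl la x) (fl mu b) = fl la x"
            using M0 fl'[of x] nn(1)[of x] by auto
          then show ?thesis using Pair True yy y1 x(1) unfolding LamC_def by auto
        qed
      qed
    qed
  qed
qed

lemma addable:
  assumes la: "is_partition la" and mu: "is_partition mu"
    and sz: "psize la + psize mu + 1 < 2 * s" and Y: "Young D"
    and D: "D = LamC s la mu \<union> {(x,y),(x,y+1)}" and nx: "(x,y) \<notin> LamC s la mu"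
  shows "\<exists>la'. is_partition la' \<and> psize la' = psize la + 1 \<and> D = LamC s la' mu"
proof -
  have xyD: "(x,y) \<in> D" "(x,y+1) \<in> D" using D by auto
  have x1: "1 \<le> x" and y1: "1 \<le> y" using YoungD(2,3)[OF Y xyD(1)] by auto
  have nn: "0 \<le> fl la a" "0 \<le> fl mu b" for a b using fl_nonneg by auto
  have nx': "x + y > 2 * int s + 1 + 2 * max (fl la x) (fl mu y)"
    using nx x1 y1 unfolding LamC_def by auto
  have f1: "x + y - 1 \<le> 2 * int s + 1 + 2 * max (fl la x) (fl mu (y - 1))" if "2 \<le> y"
  proof -
    have "(x, y - 1) \<in> D" using YoungD(4)[OF Y xyD(1), of x "y - 1"] x1 that by simp
    then have "(x, y - 1) \<in> LamC s la mu" using D by auto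
    then show ?thesis unfolding LamC_def by simp
  qed
  have f2: "x + y \<le> 2 * int s + 1 + 2 * max (fl la (x - 1)) (fl mu (y + 1))" if "2 \<le> x"
  proof -
    have "(x - 1, y + 1) \<in> D" using YoungD(4)[OF Y xyD(2), of "x - 1" "y + 1"] y1 that by simp
    then have "(x - 1, y + 1) \<in> LamC s la mu" using D by auto
    then show ?thesis unfolding LamC_def by simp
  qed
  have dj: "a + b \<le> 2 * int s - 2" if "0 < fl la a" "0 < fl mu b" for a b
    using disj[OF la mu that] sz by simp
  have lla: "int (length la) \<le> int (psize la)" "int (length mu) \<le> int (psize mu)"
    using length_le_psize[OF la] length_le_psize[OF mu] by auto
  have xle: "x \<le> int (length la) + 1"
  proof (rule ccontr)
    assume "\<not> ?thesis"
    then have "fl la x = 0" "fl la (x - 1) = 0" "2 \<le> x" using x1 unfolding fl_def by auto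
    then have "fl mu y < fl mu (y + 1)" using f2 nx' nn(2)[of y] nn(2)[of "y+1"] by (auto simp: max_def)
    moreover have "fl mu (y + 1) \<le> fl mu y" using fl_anti[OF mu y1] by simp
    ultimately show False by simp
  qed
  have y2: "2 \<le> y"
  proof (rule ccontr)
    assume "\<not> ?thesis"
    then have "y = 1" using y1 by simp
    then have "x + 1 > 2 * int s + 1" using nx' nn(1)[of x] by (auto simp: max_def split: if_splits)
    then show False using xle lla sz by simp
  qed
  have xy: "x + y = 2 * int s + 2 + 2 * fl la x"
  proof -
    have "max (fl la x) (fl mu (y - 1)) = fl la x"
    proof (rule ccontr)
      assume "\<not> ?thesis"
      then have M: "fl mu (y - 1) > fl la x" by (auto simp: max_def split: if_splits)
      then have M0: "0 < fl mu (y - 1)" using nn(1)[of x] by simp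
      have "x + y > 2 * int s + 1" using nx' nn(1)[of x] by (auto simp: max_def split: if_splits)
      moreover have "x + y \<le> 2 * int s"
      proof (cases "0 < fl la x")
        case True
        then show ?thesis using dj[OF True M0] by simp
      next
        case False
        then have "x = int (length la) + 1" using xle x1 fl_pos[OF la, of x] by simp
        moreover have "y - 1 \<le> int (length mu)" using M0 fl_pos[OF mu, of "y - 1"] by simp
        ultimately show ?thesis using lla sz by simp
      qed
      ultimately show False by simp
    qed
    then show ?thesis using f1[OF y2] nx' by (auto simp: max_def split: if_splits)
  qed
  have c: "x = 1 \<or> fl la x < fl la (x - 1)"
  proof (rule ccontr)
    assume "\<not> ?thesis"
    then have x2: "2 \<le> x" and le: "fl la (x - 1) \<le> fl la x" using x1 by auto
    have Lp: "0 < fl la (x - 1)" using fl_pos[OF la, of "x - 1"] x2 xle by simp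
    have "fl la x < fl mu (y + 1)" using f2[OF x2] xy le by (auto simp: max_def split: if_splits)
    then have "0 < fl mu (y + 1)" using nn(1)[of x] by simp
    then have "x - 1 + (y + 1) \<le> 2 * int s - 2" using dj[OF Lp, of "y + 1"] by blast
    then show False using xy nn(1)[of x] by simp
  qed
  have pg: "is_partition (growL la x)" by (rule part_growL[OF la x1 xle c])
  have yv: "y = 2 * int s + 2 - x + 2 * fl la x" using xy by simp
  have "LamC s (growL la x) mu = LamC s la mu \<union> {(x,y),(x,y+1)}"
    using grow(1)[OF la mu x1 xle pg sz] unfolding yv[symmetric] .
  then have "D = LamC s (growL la x) mu" using D by simp
  moreover have "psize (growL la x) = psize la + 1" by (rule psize_growL[OF x1 xle])
  ultimately show ?thesis using pg by blast
qed

lemma shrink: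
  assumes la: "is_partition la" and ne: "la \<noteq> []"
  shows "\<exists>la0 x. is_partition la0 \<and> 1 \<le> x \<and> x \<le> int (length la0) + 1
     \<and> growL la0 x = la \<and> psize la0 + 1 = psize la"
proof -
  define n where "n = length la"
  have n0: "0 < n" using ne unfolding n_def by simp
  define v where "v = la ! (n - 1)"
  have v1: "1 \<le> v" using part_pos[OF la, of "n - 1"] n0 unfolding v_def n_def by simp
  show ?thesis
  proof (cases "v = 1")
    case True
    define la0 where "la0 = butlast la"
    have l0: "length la0 = n - 1" unfolding la0_def n_def by simp
    have lastv: "last la = v" unfolding v_def n_def using ne by (simp add: last_conv_nth)
    have eq: "la0 @ [1] = la" unfolding la0_def using True lastv ne append_butlast_last_id[OF ne] by simp
    have p0: "is_partition la0" unfolding part_iff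
    proof (intro conjI allI impI)
      fix i j assume "i \<le> j" "j < length la0"
      then show "la0 ! j \<le> la0 ! i" using part_mono[OF la, of i j] l0 unfolding la0_def n_def
        by (simp add: nth_butlast)
    next
      fix i assume "i < length la0"
      then show "1 \<le> la0 ! i" using part_pos[OF la, of i] l0 unfolding la0_def n_def
        by (simp add: nth_butlast)
    qed
    have g: "growL la0 (int n) = la" unfolding growL_def using l0 n0 eq by simp
    have ps: "psize la0 + 1 = psize la" unfolding psize_def using eq[symmetric] by simp
    show ?thesis using p0 g ps l0 n0 by (intro exI[of _ la0] exI[of _ "int n"]) auto
  next
    case False
    then have v2: "2 \<le> v" using v1 by simp
    define la0 where "la0 = la[n - 1 := v - 1]"
    have l0: "length la0 = n" unfolding la0_def n_def by simp
    have p0: "is_partition la0" unfolding part_iff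
    proof (intro conjI allI impI)
      fix i j assume ij: "i \<le> j" "j < length la0"
      show "la0 ! j \<le> la0 ! i"
        using part_mono[OF la, of i j] part_mono[OF la, of i "n - 1"] ij l0 v2 unfolding la0_def n_def v_def
        by (auto simp: nth_list_update)
    next
      fix i assume "i < length la0"
      then show "1 \<le> la0 ! i" using part_pos[OF la, of i] l0 v2 unfolding la0_def n_def
        by (auto simp: nth_list_update)
    qed
    have e: "nat (int n - 1) = n - 1" using n0 by simp
    have g: "growL la0 (int n) = la"
      unfolding growL_def e using l0 n0 v2 unfolding la0_def v_def n_def by simp
    have ps: "psize la0 + 1 = psize la"
      unfolding psize_def la0_def using sum_list_update[of "n - 1" la "v - 1"] elem_le_sum_list[of "n - 1" la] n0 v2
      unfolding n_def v_def by simp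
    show ?thesis using p0 g ps l0 n0 by (intro exI[of _ la0] exI[of _ "int n"]) auto
  qed
qed

lemma card_cw_la:
  assumes mu: "is_partition mu"
  shows "is_partition la \<Longrightarrow> psize la + psize mu < 2 * s \<Longrightarrow>
    card (LamC s la mu) = card (LamC s [] mu) + 2 * psize la \<and> cweight (LamC s la mu) = cweight (LamC s [] mu)"
proof (induct "psize la" arbitrary: la)
  case 0
  then have "la = []" using length_le_psize[of la] by simp
  then show ?case by (simp add: psize_def)
next
  case (Suc N)
  then have "la \<noteq> []" unfolding psize_def by auto
  then obtain la0 x where la0: "is_partition la0" "1 \<le> x" "x \<le> int (length la0) + 1"
    "growL la0 x = la" "psize la0 + 1 = psize la" using shrink[OF Suc.prems(1)] by blast
  have IH: "card (LamC s la0 mu) = card (LamC s [] mu) + 2 * psize la0 \<and> cweight (LamC s la0 mu) = cweight (LamC s [] mu)"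
    using Suc.hyps(1)[of la0] la0 Suc by simp
  define y where "y = 2 * int s + 2 - x + 2 * fl la0 x"
  have pg: "is_partition (growL la0 x)" using la0 Suc.prems by simp
  have sz: "psize la0 + psize mu + 1 < 2 * s" using la0 Suc.prems by simp
  have G: "LamC s la mu = LamC s la0 mu \<union> {(x,y),(x,y+1)}" "(x,y) \<notin> LamC s la0 mu" "(x,y+1) \<notin> LamC s la0 mu"
    using grow[OF la0(1) mu la0(2,3) pg sz] la0(4) unfolding y_def by auto
  have fin: "finite (LamC s la0 mu)" using YoungD(1)[OF Young_LamC[OF la0(1) mu]] .
  have "card (LamC s la mu) = card (LamC s la0 mu) + 2"
    unfolding G(1) using G(2,3) fin by (simp add: card_insert_if)
  moreover have "cweight (LamC s la mu) = cweight (LamC s la0 mu)"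
    unfolding G(1) using cweight_union[OF fin, of "{(x,y),(x,y+1)}"] G(2,3) cweight_hdom by simp
  ultimately show ?case using IH la0(5) by simp
qed

lemma LamC_nil: "LamC s [] [] = stair (2 * s)"
  unfolding LamC_def stair_def fl_def by auto

lemma card_cw:
  assumes la: "is_partition la" and mu: "is_partition mu" and sz: "psize la + psize mu < 2 * s"
  shows "card (LamC s la mu) = s * (2 * s + 1) + 2 * psize la + 2 * psize mu \<and> cweight (LamC s la mu) = int s"
proof -
  have p0: "is_partition []" unfolding is_partition_def by simp
  have A: "card (LamC s la mu) = card (LamC s [] mu) + 2 * psize la \<and> cweight (LamC s la mu) = cweight (LamC s [] mu)"
    using card_cw_la[OF mu la sz] .
  have B: "card (LamC s mu []) = card (LamC s [] []) + 2 * psize mu \<and> cweight (LamC s mu []) = cweight (LamC s [] [])"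
    using card_cw_la[OF p0 mu] sz by (simp add: psize_def)
  have "LamC s [] mu = sw (LamC s mu [])" using sw_LamC[of s mu "[]"] by simp
  then have C: "card (LamC s [] mu) = card (LamC s mu []) \<and> cweight (LamC s [] mu) = cweight (LamC s mu [])"
    using card_sw cweight_sw by simp
  have S: "2 * card (stair (2 * s)) = 2 * s * (2 * s + 1)" "cweight (stair (2 * s)) = int s"
    using stair_props[of "2 * s"] by auto
  then have "card (stair (2 * s)) = s * (2 * s + 1)" by simp
  then show ?thesis using A B C S LamC_nil by simp
qed

lemma inj_len:
  assumes la: "is_partition la" and mu: "is_partition mu" and la': "is_partition la'" and mu': "is_partition mu'"
    and sz: "psize la + psize mu < 2 * s" and sz': "psize la' + psize mu' < 2 * s"
    and eq: "LamC s la mu = LamC s la' mu'"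
  shows "length la' \<le> length la"
proof (rule ccontr)
  assume nl: "\<not> length la' \<le> length la"
  define x where "x = int (length la) + 1"
  have L': "0 < fl la' x" using fl_pos[OF la'] nl unfolding x_def by simp
  have L0: "fl la x = 0" unfolding x_def fl_def by simp
  have xl: "x \<le> int (psize la')" using fl_pos[OF la', of x] L' length_le_psize[OF la'] by simp
  define y where "y = 2 * int s + 2 - x"
  have y1: "1 \<le> y" using xl sz' unfolding y_def by simp
  have "(x,y) \<in> LamC s la' mu'" unfolding LamC_def using L' y1 unfolding y_def x_def by (auto simp: max_def)
  then have "(x,y) \<in> LamC s la mu" using eq by simp
  then have "2 * int s + 2 \<le> 2 * int s + 1 + 2 * max 0 (fl mu y)" unfolding LamC_def y_def L0[symmetric] by simp
  then have "0 < fl mu y" by (auto simp: max_def split: if_splits)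
  then have "y \<le> int (length mu)" using fl_pos[OF mu] by simp
  then show False using length_le_psize[OF la] length_le_psize[OF mu] sz unfolding y_def x_def by simp
qed

lemma inj_val:
  assumes la: "is_partition la" and mu: "is_partition mu" and la': "is_partition la'" and mu': "is_partition mu'"
    and sz: "psize la + psize mu < 2 * s" and sz': "psize la' + psize mu' < 2 * s"
    and eq: "LamC s la mu = LamC s la' mu'" and len: "length la = length la'"
  shows "fl la x \<le> fl la' x"
proof (rule ccontr)
  assume "\<not> ?thesis"
  then have gt: "fl la' x < fl la x" by simp
  then have Lp: "0 < fl la x" using fl_nonneg[of la' x] by simp
  then have xr: "1 \<le> x" "x \<le> int (length la)" using fl_pos[OF la] by auto
  then have L'p: "0 < fl la' x" using fl_pos[OF la'] len by simp
  define y where "y = 2 * int s + 1 + 2 * fl la x - x"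
  have y1: "1 \<le> y" using xr length_le_psize[OF la] sz Lp unfolding y_def by simp
  have "(x,y) \<in> LamC s la mu" unfolding LamC_def using xr y1 unfolding y_def by simp
  then have "(x,y) \<in> LamC s la' mu'" using eq by simp
  then have "x + y \<le> 2 * int s + 1 + 2 * max (fl la' x) (fl mu' y)" unfolding LamC_def by simp
  then have "fl la x \<le> fl mu' y" using gt unfolding y_def by (auto simp: max_def split: if_splits)
  then have "0 < fl mu' y" using Lp by simp
  then have "x + y \<le> int (psize la' + psize mu')" using disj[OF la' mu' L'p] by simp
  then show False using sz' Lp unfolding y_def by simp
qed

lemma inj_la:
  assumes la: "is_partition la" and mu: "is_partition mu" and la': "is_partition la'" and mu': "is_partition mu'"
    and sz: "psize la + psize mu < 2 * s" and sz': "psize la' + psize mu' < 2 * s"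
    and eq: "LamC s la mu = LamC s la' mu'"
  shows "la = la'"
proof -
  have len: "length la = length la'"
    using inj_len[OF la mu la' mu' sz sz' eq] inj_len[OF la' mu' la mu sz' sz eq[symmetric]] by simp
  have "fl la x = fl la' x" for x
    using inj_val[OF la mu la' mu' sz sz' eq len] inj_val[OF la' mu' la mu sz' sz eq[symmetric] len[symmetric]]
    by (simp add: order_antisym)
  then have "la ! i = la' ! i" if "i < length la" for i
    using that len spec[of "\<lambda>x. fl la x = fl la' x" "int i + 1"] unfolding fl_def by simp
  then show ?thesis using len by (simp add: nth_equalityI)
qed

lemma surj_aux:
  assumes s1: "1 \<le> s" and k: "k < 2 * s"
  shows "Young D \<Longrightarrow> cweight D = int s \<Longrightarrow> card D \<le> s * (2 * s + 1) + 2 * k \<Longrightarrow>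
    \<exists>la mu. is_partition la \<and> is_partition mu \<and> psize la + psize mu \<le> k \<and> D = LamC s la mu"
proof (induct "card D" arbitrary: D rule: less_induct)
  case less
  note Y = less.prems(1) and fin = YoungD(1)[OF less.prems(1)]
  show ?case
  proof (cases "\<exists>x y. hrem D x y \<or> vrem D x y")
    case False
    then obtain m where m: "D = stair m" using core[OF Y] by blast
    then have "(if even m then int m div 2 else - ((int m + 1) div 2)) = int s"
      using stair_props[of m] less.prems(2) by simp
    then have "m = 2 * s" using s1 by (auto split: if_splits)
    then have "D = LamC s [] []" using m LamC_nil by simp
    moreover have "is_partition []" unfolding is_partition_def by simp
    ultimately show ?thesis by (intro exI[of _ "[]"]) (simp add: psize_def)
  next
    case True
    then obtain x y where h: "hrem D x y \<or> vrem D x y" by blast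
    define P where "P = (if hrem D x y then {(x,y),(x,y+1)} else {(x,y),(x+1,y)})"
    have PD: "P \<subseteq> D" using h unfolding P_def hrem_def vrem_def by auto
    have cP: "card P = 2" unfolding P_def by simp
    have wP: "cweight P = 0" unfolding P_def using cweight_hdom cweight_vdom by simp
    define D' where "D' = D - P"
    have Y': "Young D'" unfolding D'_def P_def using h Young_hrem[OF Y] Young_vrem[OF Y] by auto
    have DD: "D = D' \<union> P" unfolding D'_def using PD by blast
    have finD': "finite D'" using fin unfolding D'_def by simp
    have cD: "card D = card D' + 2"
    proof -
      have "finite P" unfolding P_def by simp
      moreover have "D' \<inter> P = {}" unfolding D'_def by blast
      ultimately show ?thesis unfolding DD using card_Un_disjoint[OF finD', of P] cP by simp
    qed
    have wD: "cweight D' = int s"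
    proof -
      have "finite P" unfolding P_def by simp
      moreover have "D' \<inter> P = {}" unfolding D'_def by blast
      ultimately have "cweight D = cweight D' + cweight P" unfolding DD by (rule cweight_union[OF finD'])
      then show ?thesis using wP less.prems(2) by simp
    qed
    obtain la mu where lm: "is_partition la" "is_partition mu" "psize la + psize mu \<le> k" "D' = LamC s la mu"
      using less.hyps[of D'] Y' wD cD less.prems(3) by auto
    have "card D' = s * (2 * s + 1) + 2 * psize la + 2 * psize mu"
      using card_cw[OF lm(1,2)] lm(3,4) k by simp
    then have sz: "psize la + psize mu + 1 \<le> k" using cD less.prems(3) by simp
    have sz2: "psize la + psize mu + 1 < 2 * s" using sz k by simp
    show ?thesis
    proof (cases "hrem D x y")
      case True
      then have P: "P = {(x,y),(x,y+1)}" unfolding P_def by simp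
      have DL: "D = LamC s la mu \<union> {(x,y),(x,y+1)}" using DD P lm(4) by simp
      have "(x,y) \<notin> D'" unfolding D'_def P by simp
      then have nx: "(x,y) \<notin> LamC s la mu" using lm(4) by simp
      obtain la' where "is_partition la'" "psize la' = psize la + 1" "D = LamC s la' mu"
        using addable[OF lm(1,2) sz2 Y DL nx] by blast
      then show ?thesis using lm sz by (intro exI[of _ la'] exI[of _ mu]) simp
    next
      case False
      then have P: "P = {(x,y),(x+1,y)}" unfolding P_def by simp
      have swP: "sw P = {(y,x),(y,x+1)}" unfolding P sw_def by simp
      have swD: "sw D = LamC s mu la \<union> {(y,x),(y,x+1)}"
        unfolding DD sw_Un swP lm(4) sw_LamC ..
      have nx: "(y,x) \<notin> LamC s mu la"
      proof
        assume "(y,x) \<in> LamC s mu la"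
        then have "(x,y) \<in> LamC s la mu" using sw_LamC[of s la mu] sw_mem[of y x "LamC s la mu"] by simp
        moreover have "(x,y) \<notin> D'" unfolding D'_def P by simp
        ultimately show False using lm(4) by simp
      qed
      have sz3: "psize mu + psize la + 1 < 2 * s" using sz2 by simp
      obtain mu' where mu': "is_partition mu'" "psize mu' = psize mu + 1" "sw D = LamC s mu' la"
        using addable[OF lm(2,1) sz3 Young_sw[OF Y] swD nx] by blast
      have "D = sw (sw D)" by simp
      also have "\<dots> = LamC s la mu'" unfolding mu'(3) sw_LamC ..
      finally show ?thesis using lm sz mu' by (intro exI[of _ la] exI[of _ mu']) simp
    qed
  qed
qed

theorem lemma4p1:
  fixes s k :: nat
  assumes "s \<ge> 1" and "2 * s > k"
  shows "(\<forall>la mu. is_partition la \<and> is_partition mu \<and> psize la + psize mu \<le> k \<longrightarrow>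
            (\<exists>nu. is_partition nu \<and> Lam s la mu = diagram nu)
            \<and> card (Lam s la mu) = s * (2 * s + 1) + 2 * psize la + 2 * psize mu
            \<and> cweight (Lam s la mu) = int s)
       \<and> bij_betw (\<lambda>(la, mu). Lam s la mu)
           {(la, mu). is_partition la \<and> is_partition mu \<and> psize la + psize mu \<le> k}
           (diagram ` {nu. is_partition nu \<and> cweight (diagram nu) = int s
                          \<and> psize nu \<le> s * (2 * s + 1) + 2 * k})"
proof -
  have LL: "Lam s la mu = LamC s la mu" if "is_partition la" "is_partition mu" "psize la + psize mu \<le> k" for la mu
    using Lam_char[OF that(1,2)] length_le_psize[OF that(1)] length_le_psize[OF that(2)] that(3) assms(2)
    by simp
  have A: "(\<exists>nu. is_partition nu \<and> Lam s la mu = diagram nu)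
            \<and> card (Lam s la mu) = s * (2 * s + 1) + 2 * psize la + 2 * psize mu
            \<and> cweight (Lam s la mu) = int s"
    if "is_partition la" "is_partition mu" "psize la + psize mu \<le> k" for la mu
  proof -
    have sz: "psize la + psize mu < 2 * s" using that(3) assms(2) by simp
    show ?thesis unfolding LL[OF that] using Young_ex[OF Young_LamC[OF that(1,2)]] card_cw[OF that(1,2) sz]
      by blast
  qed
  define V where "V = {(la, mu). is_partition la \<and> is_partition mu \<and> psize la + psize mu \<le> k}"
  define T where "T = diagram ` {nu. is_partition nu \<and> cweight (diagram nu) = int s
                          \<and> psize nu \<le> s * (2 * s + 1) + 2 * k}"
  have inj: "inj_on (\<lambda>(la, mu). Lam s la mu) V"
  proof (rule inj_onI)
    fix p q assume p: "p \<in> V" and q: "q \<in> V" and e: "(\<lambda>(la, mu). Lam s la mu) p = (\<lambda>(la, mu). Lam s la mu) q"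
    obtain la mu where pp: "p = (la, mu)" "is_partition la" "is_partition mu" "psize la + psize mu \<le> k"
      using p unfolding V_def by blast
    obtain la' mu' where qq: "q = (la', mu')" "is_partition la'" "is_partition mu'" "psize la' + psize mu' \<le> k"
      using q unfolding V_def by blast
    have eq: "LamC s la mu = LamC s la' mu'" using e pp qq LL by simp
    have sz: "psize la + psize mu < 2 * s" "psize la' + psize mu' < 2 * s" using pp qq assms(2) by auto
    have "la = la'" by (rule inj_la[OF pp(2,3) qq(2,3) sz eq])
    moreover have "mu = mu'"
    proof (rule inj_la[OF pp(3,2) qq(3,2)])
      show "psize mu + psize la < 2 * s" "psize mu' + psize la' < 2 * s" using sz by auto
      show "LamC s mu la = LamC s mu' la'" using eq sw_LamC by metis
    qed
    ultimately show "p = q" using pp qq by simp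
  qed
  have img: "(\<lambda>(la, mu). Lam s la mu) ` V = T"
  proof
    show "(\<lambda>(la, mu). Lam s la mu) ` V \<subseteq> T"
    proof
      fix D assume "D \<in> (\<lambda>(la, mu). Lam s la mu) ` V"
      then obtain la mu where lm: "is_partition la" "is_partition mu" "psize la + psize mu \<le> k" "D = Lam s la mu"
        unfolding V_def by blast
      obtain nu where nu: "is_partition nu" "D = diagram nu" using A[OF lm(1-3)] lm(4) by blast
      have "card D = s * (2 * s + 1) + 2 * psize la + 2 * psize mu" "cweight D = int s"
        using A[OF lm(1-3)] lm(4) by auto
      then have "psize nu \<le> s * (2 * s + 1) + 2 * k" "cweight (diagram nu) = int s"
        using nu card_diagram[of nu] lm(3) by auto
      then show "D \<in> T" unfolding T_def using nu by blast
    qed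
    show "T \<subseteq> (\<lambda>(la, mu). Lam s la mu) ` V"
    proof
      fix D assume "D \<in> T"
      then obtain nu where nu: "is_partition nu" "cweight (diagram nu) = int s"
          "psize nu \<le> s * (2 * s + 1) + 2 * k" "D = diagram nu"
        unfolding T_def by blast
      have Y: "Young D" using Young_diagram[OF nu(1)] nu(4) by simp
      have "card D \<le> s * (2 * s + 1) + 2 * k" using card_diagram[of nu] nu by simp
      then obtain la mu where lm: "is_partition la" "is_partition mu" "psize la + psize mu \<le> k" "D = LamC s la mu"
        using surj_aux[OF assms(1) assms(2) Y] nu by auto
      then have "D = (\<lambda>(la, mu). Lam s la mu) (la, mu)" using LL[OF lm(1-3)] by simp
      moreover have "(la, mu) \<in> V" unfolding V_def using lm by simp
      ultimately show "D \<in> (\<lambda>(la, mu). Lam s la mu) ` V" by blast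
    qed
  qed
  show ?thesis using A inj img unfolding bij_betw_def V_def T_def by blast
qed

end
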